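(* Let $n\ge1$ and let $\mathbf t$ be a rooted plane tree with $n+1$ vertices. Order the vertices of $\mathbf t$ in depth-first (preorder) order starting from the root, let $l_1,\dots,l_k$ be the leaves of $\mathbf t$ listed in this order, let $s_i$ be the number of vertices of $\mathbf t$ preceding $l_i$ in this order, and let $p_i$ be the depth of $l_i$ (the number of vertices on the path from the root to $l_i$, excluding $l_i$). Let $A=\{s_1,\dots,s_k\}$ and $B=\{s_i-p_i+1: 1\le i\le k\}$. Then $s_1<\dots<s_k$ and $s_1-p_1+1<\dots<s_k-p_k+1$ are increasing subsequences of $[n]=\{1,\dots,n\}$; define $\tau_{\mathbf t}:[n]\to[n]$ by $\tau_{\mathbf t}(s_i-p_i+1)=s_i$ for $1\le i\le k$, and on $[n]\setminus B$ by assigning the elements of $[n]\setminus A$ in increasing order. Then: (i) $\tau_{\mathbf t}\in\mathrm{Av}_n(321)$; (ii) the map $\mathbf t\mapsto\tau_{\mathbf t}$ is a bijection from the set of rooted plane trees with $n+1$ vertices onto $\mathrm{Av}_n(321)$; (iii) the left-to-right maxima of $\tau_{\mathbf t}$ are exactly at the positions $s_i-p_i+1$, with values $s_i$; (iv) the fixed points of $\tau_{\mathbf t}$ are exactly the points $s_i$ with $p_i=1$, i.e. they correspond to the leaves of $\mathbf t$ that are children of the root.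
   Context: $\mathrm{Av}_n(321)$ is the set of permutations $\tau\in S_n$ containing no indices $i<j<k$ with $\tau(i)>\tau(j)>\tau(k)$. A left-to-right maximum of $\tau$ is a position $m$ with $\tau(m)>\tau(j)$ for all $j<m$. *)

theory Defs
  imports "HOL-Combinatorics.Permutations"
begin

datatype ptree = Node "ptree list"

fun nverts :: "ptree \<Rightarrow> nat" where
  "nverts (Node ts) = Suc (sum_list (map nverts ts))"

text \<open>Preorder (depth-first) traversal; each vertex is recorded with its depth
  (root has depth 0) and whether it is a leaf.\<close>
fun preorder :: "nat \<Rightarrow> ptree \<Rightarrow> (nat \<times> bool) list" where
  "preorder d (Node ts) = (d, ts = []) # concat (map (preorder (Suc d)) ts)"

text \<open>The list of pairs (s_i, p_i) for the leaves l_1,...,l_k in preorder: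
  s_i = number of vertices preceding l_i, p_i = depth of l_i.\<close>
definition leaf_data :: "ptree \<Rightarrow> (nat \<times> nat) list" where
  "leaf_data t = map (\<lambda>(i, (d, b)). (i, d))
     (filter (\<lambda>(i, (d, b)). b) (enumerate 0 (preorder 0 t)))"

definition leafA :: "ptree \<Rightarrow> nat set" where
  "leafA t = set (map fst (leaf_data t))"

definition leafB :: "ptree \<Rightarrow> nat set" where
  "leafB t = set (map (\<lambda>(s, p). s - p + 1) (leaf_data t))"

text \<open>The permutation tau_t of [n], n = nverts t - 1 (identity outside [n]).\<close>
definition tau :: "ptree \<Rightarrow> nat \<Rightarrow> nat" where
  "tau t x = (let n = nverts t - 1 in
     case map_of (map (\<lambda>(s, p). (s - p + 1, s)) (leaf_data t)) x of
       Some y \<Rightarrow> y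
     | None \<Rightarrow> (if x \<in> {1..n}
                then sorted_list_of_set ({1..n} - leafA t)
                       ! card {y \<in> {1..n} - leafB t. y < x}
                else x))"

definition Av321 :: "nat \<Rightarrow> (nat \<Rightarrow> nat) set" where
  "Av321 n = {\<tau>. \<tau> permutes {1..n} \<and>
     \<not> (\<exists>i j k. 1 \<le> i \<and> i < j \<and> j < k \<and> k \<le> n \<and> \<tau> i > \<tau> j \<and> \<tau> j > \<tau> k)}"

definition ltr_max :: "nat \<Rightarrow> (nat \<Rightarrow> nat) \<Rightarrow> nat set" where
  "ltr_max n \<tau> = {m \<in> {1..n}. \<forall>j. 1 \<le> j \<and> j < m \<longrightarrow> \<tau> j < \<tau> m}"

end

theory Submission
  imports Defs
begin



lemma rank_nth:
  fixes S :: "nat set"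
  assumes "finite S" "r < card S"
  shows "card {y\<in>S. y < sorted_list_of_set S ! r} = r"
proof -
  define xs where "xs = sorted_list_of_set S"
  have ss: "sorted_wrt (<) xs" and st: "set xs = S" and len: "length xs = card S"
    using assms by (auto simp: xs_def)
  have d: "distinct xs" using ss strict_sorted_iff by blast
  have "{y\<in>S. y < xs ! r} = set (take r xs)"
  proof safe
    fix y assume "y \<in> S" "y < xs ! r"
    then obtain i where i: "i < length xs" "y = xs ! i" using st by (metis in_set_conv_nth)
    have "i < r"
    proof (rule ccontr)
      assume "\<not> i < r"
      then have "r \<le> i" by simp
      then have "xs ! r \<le> xs ! i"
      proof (cases "r = i")
        case False
        then have "r < i" using \<open>r \<le> i\<close> by simp
        then show ?thesis using sorted_wrt_nth_less[OF ss \<open>r < i\<close>] i by simp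
      qed simp
      then show False using i \<open>y < xs ! r\<close> by simp
    qed
    then show "y \<in> set (take r xs)" using i by (auto simp: in_set_conv_nth)
  next
    fix y assume "y \<in> set (take r xs)"
    then obtain i where i: "i < r" "y = xs ! i" using assms len
      by (auto simp: in_set_conv_nth)
    then show "y \<in> S" using st assms len by auto
    show "y < xs ! r" using ss i assms len sorted_wrt_nth_less by metis
  qed
  moreover have "card (set (take r xs)) = r"
    using d assms len by (simp add: distinct_card)
  ultimately show ?thesis by (simp add: xs_def)
qed

lemma nth_rank:
  fixes S :: "nat set"
  assumes "finite S" "z \<in> S"
  shows "sorted_list_of_set S ! card {y\<in>S. y < z} = z"
proof -
  obtain i where i: "i < length (sorted_list_of_set S)" "z = sorted_list_of_set S ! i"
    using assms by (metis in_set_conv_nth set_sorted_list_of_set)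
  then have "card {y\<in>S. y < z} = i" using rank_nth[OF assms(1), of i] assms by simp
  then show ?thesis using i by simp
qed

lemma nth_in:
  fixes S :: "nat set"
  assumes "finite S" "r < card S"
  shows "sorted_list_of_set S ! r \<in> S"
  using assms by (metis length_sorted_list_of_set nth_mem set_sorted_list_of_set)

lemma nth_less_iff:
  fixes S :: "nat set"
  assumes "finite S" "r < card S"
  shows "sorted_list_of_set S ! r < z \<longleftrightarrow> r < card {y\<in>S. y < z}"
proof -
  define w where "w = sorted_list_of_set S ! r"
  have w: "w \<in> S" "card {y\<in>S. y < w} = r" using nth_in rank_nth assms w_def by auto
  show ?thesis
  proof
    assume "sorted_list_of_set S ! r < z"
    then have "w < z" by (simp add: w_def)
    then have "{y\<in>S. y < w} \<subset> {y\<in>S. y < z}" using w by auto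
    then show "r < card {y\<in>S. y < z}" using w assms by (metis (no_types, lifting) finite_subset mem_Collect_eq subsetI psubset_card_mono)
  next
    assume "r < card {y\<in>S. y < z}"
    show "sorted_list_of_set S ! r < z"
    proof (rule ccontr)
      assume "\<not> ?thesis"
      then have "z \<le> w" by (simp add: w_def)
      then have "{y\<in>S. y < z} \<subseteq> {y\<in>S. y < w}" by auto
      then have "card {y\<in>S. y < z} \<le> r" using w assms by (metis (no_types, lifting) card_mono finite_subset mem_Collect_eq subsetI)
      then show False using \<open>r < card {y\<in>S. y < z}\<close> by simp
    qed
  qed
qed

lemma rank_less_card:
  fixes S :: "nat set"
  assumes "finite S" "x \<in> S"
  shows "card {y\<in>S. y < x} < card S"
  using assms by (intro psubset_card_mono) auto

lemma rank_mono:
  fixes S :: "nat set"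
  assumes "finite S" "x \<in> S" "x < x'"
  shows "card {y\<in>S. y < x} < card {y\<in>S. y < x'}"
  using assms by (intro psubset_card_mono) auto

lemma incr_unique:
  fixes f :: "nat \<Rightarrow> nat"
  assumes "finite C" "f ` C = D" "\<And>x y. x \<in> C \<Longrightarrow> y \<in> C \<Longrightarrow> x < y \<Longrightarrow> f x < f y" "x \<in> C"
  shows "f x = sorted_list_of_set D ! card {y\<in>C. y < x}"
proof -
  have fin: "finite D" using assms by auto
  have inj: "inj_on f C" using assms(3) by (metis inj_on_def linorder_neqE_nat less_irrefl)
  have "{y\<in>D. y < f x} = f ` {y\<in>C. y < x}"
  proof safe
    fix z assume "z \<in> D" "z < f x"
    then obtain y where "y \<in> C" "z = f y" using assms by auto
    moreover have "y < x" using assms \<open>z < f x\<close> calculation by (metis linorder_neqE_nat not_less_iff_gr_or_eq)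
    ultimately show "z \<in> f ` {y\<in>C. y < x}" by auto
  qed (use assms in auto)
  then have "card {y\<in>D. y < f x} = card {y\<in>C. y < x}"
    using inj by (metis (no_types, lifting) card_image inj_on_subset mem_Collect_eq subsetI)
  moreover have "f x \<in> D" using assms by auto
  ultimately show ?thesis using nth_rank[OF fin] by metis
qed




definition okstep :: "nat \<times> bool \<Rightarrow> nat \<times> bool \<Rightarrow> bool" where
  "okstep x y = (if snd x then fst y \<le> fst x else fst y = Suc (fst x))"

definition treeV :: "nat \<Rightarrow> (nat \<times> bool) list \<Rightarrow> bool" where
  "treeV d P = (P \<noteq> [] \<and> fst (hd P) = d \<and> (\<forall>p\<in>set (tl P). d < fst p) \<and> successively okstep P \<and> snd (last P))"

definition forestV :: "nat \<Rightarrow> (nat \<times> bool) list \<Rightarrow> bool" where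
  "forestV e R = (R = [] \<or> (fst (hd R) = e \<and> (\<forall>p\<in>set R. e \<le> fst p) \<and> successively okstep R \<and> snd (last R)))"

lemma preorder_ne: "preorder d t \<noteq> []"
  by (cases t) simp

lemma preorder_hd: "hd (preorder d t) = (d, case t of Node ts \<Rightarrow> ts = [])"
  by (cases t) simp

lemma length_preorder: "length (preorder d t) = nverts t"
proof (induction t arbitrary: d)
  case (Node ts)
  have "map (length \<circ> preorder (Suc d)) ts = map nverts ts"
    using Node by (auto intro: map_cong)
  then show ?case by (simp add: length_concat del: map_eq_conv)
qed

lemma treeV_set: "treeV e X \<Longrightarrow> p \<in> set X \<Longrightarrow> e \<le> fst p"
  unfolding treeV_def by (cases X) auto

lemma forest_append:
  assumes "treeV e X" "forestV e R"
  shows "forestV e (X @ R)"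
proof -
  have X: "X \<noteq> []" "fst (hd X) = e" "successively okstep X" "snd (last X)"
    using assms(1) by (auto simp: treeV_def)
  have all: "\<forall>p\<in>set (X @ R). e \<le> fst p"
    using assms treeV_set[OF assms(1)] by (auto simp: forestV_def)
  have succ: "successively okstep (X @ R)"
  proof (cases "R = []")
    case False
    then have "fst (hd R) = e" "successively okstep R" using assms(2) by (auto simp: forestV_def)
    moreover have "e \<le> fst (last X)" using treeV_set[OF assms(1)] X(1) by simp
    ultimately show ?thesis using X by (auto simp: successively_append_iff okstep_def)
  qed (use X in simp)
  have "snd (last (X @ R))"
    using X assms(2) by (cases "R = []") (auto simp: forestV_def)
  then show ?thesis using X all succ by (auto simp: forestV_def)
qed

lemma preorder_V: "treeV d (preorder d t)"
proof (induction t arbitrary: d)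
  case (Node ts)
  have F: "forestV (Suc d) (concat (map (preorder (Suc d)) ts))"
    using Node.IH
  proof (induction ts)
    case Nil
    then show ?case by (simp add: forestV_def)
  next
    case (Cons t ts)
    then show ?case using forest_append by simp
  qed
  define R where "R = concat (map (preorder (Suc d)) ts)"
  have Rne: "R = [] \<longleftrightarrow> ts = []" unfolding R_def using preorder_ne by (cases ts) auto
  have F': "forestV (Suc d) R" using F R_def by simp
  have "successively okstep ((d, ts = []) # R)"
    using F' Rne by (cases R) (auto simp: forestV_def okstep_def)
  moreover have "snd (last ((d, ts = []) # R))"
    using F' Rne by (auto simp: forestV_def)
  moreover have "\<forall>p\<in>set R. d < fst p" using F' by (auto simp: forestV_def)
  ultimately show ?case by (simp add: treeV_def R_def[symmetric])
qed

lemma forest_build: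
  assumes IH: "\<And>d Q. length Q < m \<Longrightarrow> treeV d Q \<Longrightarrow> \<exists>t. preorder d t = Q"
  shows "forestV e R \<Longrightarrow> length R < m \<Longrightarrow> \<exists>ts. concat (map (preorder e) ts) = R"
proof (induction "length R" arbitrary: R rule: less_induct)
  case less
  show ?case
  proof (cases R)
    case Nil
    then show ?thesis by (intro exI[of _ "[]"]) simp
  next
    case (Cons r R')
    define tw where "tw = takeWhile (\<lambda>p. e < fst p) R'"
    define dw where "dw = dropWhile (\<lambda>p. e < fst p) R'"
    have split: "R = (r # tw) @ dw" using Cons by (simp add: tw_def dw_def)
    have fR: "fst (hd R) = e" "\<forall>p\<in>set R. e \<le> fst p" "successively okstep R" "snd (last R)"
      using less.prems Cons by (auto simp: forestV_def)
    have s1: "successively okstep (r # tw)" and s2: "successively okstep dw"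
      and s3: "dw \<noteq> [] \<Longrightarrow> okstep (last (r # tw)) (hd dw)"
      using fR(3) split by (auto simp: successively_append_iff simp del: append.simps(2) append_Cons)
    have hddw: "dw \<noteq> [] \<Longrightarrow> fst (hd dw) = e"
    proof -
      assume "dw \<noteq> []"
      then have "\<not> e < fst (hd dw)" unfolding dw_def using hd_dropWhile by blast
      moreover have "hd dw \<in> set R" using \<open>dw \<noteq> []\<close> split by auto
      ultimately show ?thesis using fR(2) by fastforce
    qed
    have lastb: "snd (last (r # tw))"
    proof (cases "dw = []")
      case True
      then show ?thesis using fR(4) split by simp
    next
      case False
      have "last (r # tw) \<in> set R" using split by auto
      then have "e \<le> fst (last (r # tw))" using fR(2) by auto
      then show ?thesis using s3[OF False] hddw[OF False] by (auto simp: okstep_def split: if_splits)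
    qed
    have "treeV e (r # tw)"
      using fR Cons s1 lastb by (auto simp: treeV_def tw_def dest: set_takeWhileD)
    moreover have "length (r # tw) < m" using split less.prems by simp
    ultimately obtain t where t: "preorder e t = r # tw" using IH by blast
    have "forestV e dw"
      using hddw s2 fR split by (auto simp: forestV_def)
    moreover have "length dw < length R" using split by simp
    ultimately obtain ts where "concat (map (preorder e) ts) = dw"
      using less.hyps less.prems by fastforce
    then have "concat (map (preorder e) (t # ts)) = R" using t split by simp
    then show ?thesis by blast
  qed
qed

lemma tree_build: "treeV d P \<Longrightarrow> \<exists>t. preorder d t = P"
proof (induction "length P" arbitrary: d P rule: less_induct)
  case less
  have P: "P \<noteq> []" "fst (hd P) = d" "\<forall>p\<in>set (tl P). d < fst p" "successively okstep P" "snd (last P)"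
    using less.prems by (auto simp: treeV_def)
  obtain p R where pR: "P = p # R" using P(1) by (cases P) auto
  show ?case
  proof (cases "R = []")
    case True
    then have "P = [(d, True)]" using P pR by (cases p) auto
    then show ?thesis by (intro exI[of _ "Node []"]) simp
  next
    case False
    have o: "okstep p (hd R)" using P(4) pR False by (cases R) auto
    have "d < fst (hd R)" using P(3) pR False by simp
    then have sp: "\<not> snd p" "fst (hd R) = Suc d" using o P(2) pR by (auto simp: okstep_def split: if_splits)
    have "forestV (Suc d) R"
      using P pR False sp by (auto simp: forestV_def Suc_le_eq successively_Cons)
    moreover have "\<And>d' Q. length Q < length P \<Longrightarrow> treeV d' Q \<Longrightarrow> \<exists>t. preorder d' t = Q"
      using less.hyps by blast
    ultimately obtain ts where ts: "concat (map (preorder (Suc d)) ts) = R"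
      using forest_build[of "length P" "Suc d" R] pR by auto
    then have "ts \<noteq> []" using False by auto
    then have "preorder d (Node ts) = P" using ts pR sp P(2) by (cases p) auto
    then show ?thesis by blast
  qed
qed

lemma block_take:
  assumes "treeV e X" "forestV e R"
  shows "tl X = takeWhile (\<lambda>p. e < fst p) (tl X @ R)"
proof -
  have "\<forall>p\<in>set (tl X). e < fst p" using assms(1) by (simp add: treeV_def)
  then have "takeWhile (\<lambda>p. e < fst p) (tl X @ R) = tl X @ takeWhile (\<lambda>p. e < fst p) R"
    by (simp add: takeWhile_append2)
  moreover have "takeWhile (\<lambda>p. e < fst p) R = []"
    using assms(2) by (cases R) (auto simp: forestV_def)
  ultimately show ?thesis by simp
qed

lemma forestV_concat: "forestV e (concat (map (preorder e) ts))"
proof (induction ts)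
  case Nil then show ?case by (simp add: forestV_def)
next
  case (Cons t ts) then show ?case using forest_append preorder_V by simp
qed

lemma preorder_inj: "preorder d t = preorder d t' \<Longrightarrow> t = t'"
proof (induction t arbitrary: d t')
  case (Node ts)
  obtain ts' where t': "t' = Node ts'" by (cases t')
  have eq: "concat (map (preorder (Suc d)) ts) = concat (map (preorder (Suc d)) ts')"
    using Node.prems t' by simp
  have "ts = ts'"
    using Node.IH eq
  proof (induction ts arbitrary: ts')
    case Nil
    then show ?case using preorder_ne by (cases ts') auto
  next
    case (Cons t ts ts')
    then obtain t1 ts1 where ts': "ts' = t1 # ts1" using preorder_ne by (cases ts') auto
    define X where "X = preorder (Suc d) t"
    define X1 where "X1 = preorder (Suc d) t1"
    define R where "R = concat (map (preorder (Suc d)) ts)"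
    define R1 where "R1 = concat (map (preorder (Suc d)) ts1)"
    have e: "X @ R = X1 @ R1" using Cons.prems ts' by (simp add: X_def X1_def R_def R1_def)
    have hX: "hd X = hd X1"
      using e preorder_ne X_def X1_def by (metis hd_append2)
    have tX: "tl X @ R = tl X1 @ R1"
      using e preorder_ne X_def X1_def by (metis list.collapse append_Cons list.inject)
    have "tl X = tl X1"
      using block_take[OF preorder_V[of "Suc d" t] forestV_concat[of "Suc d" ts]]
            block_take[OF preorder_V[of "Suc d" t1] forestV_concat[of "Suc d" ts1]] tX
      by (simp add: X_def X1_def R_def R1_def)
    then have "X = X1" using hX preorder_ne X_def X1_def by (metis list.collapse)
    then have "t = t1" "R = R1" using e Cons.prems(1) by (auto simp: X_def X1_def)
    then show ?case using Cons ts' by (auto simp: R_def R1_def)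
  qed
  then show ?case using t' by simp
qed

lemma enumerate_nth: "enumerate 0 P = map (\<lambda>j. (j, P ! j)) [0..<length P]"
  by (rule nth_equalityI) (auto simp: enumerate_eq_zip)

lemma leaf_data_alt:
  "leaf_data t = (let P = preorder 0 t in map (\<lambda>j. (j, fst (P ! j))) (filter (\<lambda>j. snd (P ! j)) [0..<length P]))"
  unfolding leaf_data_def Let_def enumerate_nth
  by (simp add: filter_map comp_def case_prod_beta)




lemma treeV_idx:
  assumes "treeV d P"
  shows "P \<noteq> []" "fst (P ! 0) = d" "\<And>j. 0 < j \<Longrightarrow> j < length P \<Longrightarrow> d < fst (P ! j)"
    "\<And>j. Suc j < length P \<Longrightarrow> okstep (P ! j) (P ! Suc j)" "snd (P ! (length P - 1))"
proof -
  show ne: "P \<noteq> []" using assms by (simp add: treeV_def)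
  show "fst (P ! 0) = d" using assms ne by (simp add: treeV_def hd_conv_nth)
  show "\<And>j. 0 < j \<Longrightarrow> j < length P \<Longrightarrow> d < fst (P ! j)"
  proof -
    fix j assume "0 < j" "j < length P"
    then have "P ! j = tl P ! (j - 1)" "j - 1 < length (tl P)" by (auto simp: nth_tl)
    then have "P ! j \<in> set (tl P)" by simp
    then show "d < fst (P ! j)" using assms by (simp add: treeV_def)
  qed
  show "\<And>j. Suc j < length P \<Longrightarrow> okstep (P ! j) (P ! Suc j)"
    using assms successively_nth by (auto simp: treeV_def)
  show "snd (P ! (length P - 1))" using assms ne by (simp add: treeV_def last_conv_nth)
qed

lemma treeV_of_idx:
  assumes "P \<noteq> []" "fst (P ! 0) = d" "\<And>j. 0 < j \<Longrightarrow> j < length P \<Longrightarrow> d < fst (P ! j)"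
    "\<And>j. Suc j < length P \<Longrightarrow> okstep (P ! j) (P ! Suc j)" "snd (P ! (length P - 1))"
  shows "treeV d P"
proof -
  have "\<forall>p\<in>set (tl P). d < fst p"
  proof
    fix p assume "p \<in> set (tl P)"
    then obtain i where "i < length (tl P)" "p = tl P ! i" by (auto simp: in_set_conv_nth)
    then show "d < fst p" using assms(3)[of "Suc i"] by (simp add: nth_tl)
  qed
  then show ?thesis using assms
    by (simp add: treeV_def hd_conv_nth last_conv_nth successively_conv_nth)
qed

definition nl :: "(nat \<times> bool) list \<Rightarrow> nat \<Rightarrow> nat" where
  "nl P x = (LEAST l. x \<le> l \<and> l < length P \<and> snd (P ! l))"

context
  fixes P :: "(nat \<times> bool) list"
  assumes V: "treeV 0 P"
begin

abbreviation "dd j \<equiv> fst (P ! j)"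
abbreviation "lf j \<equiv> snd (P ! j)"

lemma V1: "dd 0 = 0" using treeV_idx[OF V] by simp
lemma V2: "0 < j \<Longrightarrow> j < length P \<Longrightarrow> 0 < dd j" using treeV_idx(3)[OF V] by simp
lemma V3a: "Suc j < length P \<Longrightarrow> lf j \<Longrightarrow> dd (Suc j) \<le> dd j"
  using treeV_idx(4)[OF V] by (force simp: okstep_def)
lemma V3b: "Suc j < length P \<Longrightarrow> \<not> lf j \<Longrightarrow> dd (Suc j) = Suc (dd j)"
  using treeV_idx(4)[OF V] by (force simp: okstep_def)
lemma V4: "lf (length P - 1)" using treeV_idx(5)[OF V] .

lemma D1: "j \<le> j' \<Longrightarrow> j' < length P \<Longrightarrow> dd j' \<le> dd j + (j' - j)"
proof (induction j' rule: dec_induct)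
  case base then show ?case by simp
next
  case (step m)
  then have "dd (Suc m) \<le> Suc (dd m)" using V3a V3b by (cases "lf m") force+
  then show ?case using step by simp
qed

lemma D3: "j \<le> j' \<Longrightarrow> j' < length P \<Longrightarrow> (\<forall>l. j \<le> l \<and> l < j' \<longrightarrow> \<not> lf l) \<Longrightarrow> dd j' = dd j + (j' - j)"
proof (induction j' rule: dec_induct)
  case base then show ?case by simp
next
  case (step m)
  then have "dd (Suc m) = Suc (dd m)" using V3b by force
  then show ?case using step by simp
qed

lemma dd_le: "j < length P \<Longrightarrow> dd j \<le> j"
  using D1[of 0 j] V1 by simp

lemma D2: "lf j \<Longrightarrow> j < j' \<Longrightarrow> j' < length P \<Longrightarrow> dd j' + 1 \<le> dd j + (j' - j)"
proof -
  assume a: "lf j" "j < j'" "j' < length P"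
  have "dd (Suc j) \<le> dd j" using V3a a by simp
  moreover have "dd j' \<le> dd (Suc j) + (j' - Suc j)" using D1[of "Suc j" j'] a by simp
  ultimately show ?thesis using a by simp
qed

lemma T2: "lf j \<Longrightarrow> j < j' \<Longrightarrow> j' < length P \<Longrightarrow> j - dd j < j' - dd j'"
  using D2[of j j'] dd_le[of j] dd_le[of j'] by simp

lemma lf0: "2 \<le> length P \<Longrightarrow> \<not> lf 0"
proof
  assume "2 \<le> length P" "lf 0"
  then have "dd 1 \<le> dd 0" using V3a[of 0] by simp
  moreover have "0 < dd 1" using V2[of 1] \<open>2 \<le> length P\<close> by simp
  ultimately show False using V1 by simp
qed


lemma nl_props:
  assumes "x < length P"
  shows "x \<le> nl P x" "nl P x < length P" "lf (nl P x)" "\<And>l. x \<le> l \<Longrightarrow> l < nl P x \<Longrightarrow> \<not> lf l"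
proof -
  have ex: "\<exists>l. x \<le> l \<and> l < length P \<and> lf l"
    using assms V4 by (intro exI[of _ "length P - 1"]) auto
  show "x \<le> nl P x" "nl P x < length P" "lf (nl P x)"
    using LeastI_ex[OF ex] by (auto simp: nl_def)
  show "\<And>l. x \<le> l \<Longrightarrow> l < nl P x \<Longrightarrow> \<not> lf l"
  proof -
    fix l assume "x \<le> l" "l < nl P x"
    then show "\<not> lf l" using not_less_Least[of l "\<lambda>l. x \<le> l \<and> l < length P \<and> lf l"]
      \<open>nl P x < length P\<close> by (auto simp: nl_def)
  qed
qed

lemma dd_nl: "x < length P \<Longrightarrow> dd (nl P x) = dd x + (nl P x - x)"
  using D3[of x "nl P x"] nl_props[of x] by auto

lemma T3: "0 < x \<Longrightarrow> x < length P \<Longrightarrow> \<exists>j. lf j \<and> j < length P \<and> x \<le> j \<and> j - dd j < x"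
proof -
  assume a: "0 < x" "x < length P"
  have "0 < dd x" using V2 a by simp
  then show ?thesis using nl_props[OF a(2)] dd_nl[OF a(2)] a
    by (intro exI[of _ "nl P x"]) auto
qed

end

lemma V_inj:
  assumes "treeV 0 P" "treeV 0 Q" "length P = length Q"
    "\<And>j. j < length P \<Longrightarrow> snd (P ! j) = snd (Q ! j)"
    "\<And>j. j < length P \<Longrightarrow> snd (P ! j) \<Longrightarrow> fst (P ! j) = fst (Q ! j)"
  shows "P = Q"
proof (rule nth_equalityI)
  show "length P = length Q" by fact
  fix x assume x: "x < length P"
  have "(\<lambda>l. x \<le> l \<and> l < length P \<and> snd (P ! l)) = (\<lambda>l. x \<le> l \<and> l < length Q \<and> snd (Q ! l))"
    using assms(3,4) by auto
  then have "nl P x = nl Q x" by (simp add: nl_def)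
  moreover have "fst (P ! nl P x) = fst (Q ! nl P x)"
    using nl_props[OF assms(1) x] assms(5) by blast
  moreover have "fst (P ! nl P x) = fst (P ! x) + (nl P x - x)" using dd_nl[OF assms(1) x] .
  moreover have "fst (Q ! nl Q x) = fst (Q ! x) + (nl Q x - x)" using dd_nl[OF assms(2)] x assms(3) by simp
  ultimately have "fst (P ! x) = fst (Q ! x)" by simp
  then show "P ! x = Q ! x" using assms(4)[OF x] by (simp add: prod_eq_iff)
qed




definition sigL :: "nat \<Rightarrow> (nat \<times> nat) list \<Rightarrow> nat \<Rightarrow> nat" where
  "sigL n L x = (case map_of L x of Some y \<Rightarrow> y
     | None \<Rightarrow> (if x \<in> {1..n} then sorted_list_of_set ({1..n} - snd ` set L)
                    ! card {y \<in> {1..n} - fst ` set L. y < x} else x))"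

lemma sorted_list_of_set_strict:
  fixes xs :: "nat list"
  assumes "sorted_wrt (<) xs" shows "sorted_list_of_set (set xs) = xs"
  using assms by (metis sorted_list_of_set.idem_if_sorted_distinct strict_sorted_iff)

lemma split_count:
  fixes S :: "nat set"
  assumes "S \<subseteq> {1..n}" "x \<le> Suc n"
  shows "card {y \<in> {1..n} - S. y < x} + card {y\<in>S. y < x} = x - 1"
proof -
  have "{y \<in> {1..n} - S. y < x} \<union> {y\<in>S. y < x} = {1..<x}" using assms by auto
  moreover have "{y \<in> {1..n} - S. y < x} \<inter> {y\<in>S. y < x} = {}" by auto
  moreover have "finite {y\<in>S. y < x}" "finite {y \<in> {1..n} - S. y < x}" by auto
  ultimately show ?thesis by (metis card_Un_disjoint card_atLeastLessThan)
qed

lemma sorted_idx_iff: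
  fixes f :: "'b \<Rightarrow> nat"
  assumes "sorted_wrt (<) (map f L)" "i < length L" "j < length L"
  shows "f (L ! i) < f (L ! j) \<longleftrightarrow> i < j"
proof
  assume "i < j" then show "f (L ! i) < f (L ! j)"
    using sorted_wrt_nth_less[OF assms(1)] assms by fastforce
next
  assume a: "f (L ! i) < f (L ! j)"
  show "i < j"
  proof (rule ccontr)
    assume "\<not> i < j"
    then have "j < i \<or> j = i" by auto
    then show False
    proof
      assume "j < i" then have "f (L ! j) < f (L ! i)"
        using sorted_wrt_nth_less[OF assms(1)] assms by fastforce
      then show False using a by simp
    qed (use a in simp)
  qed
qed

lemma rank_L:
  fixes L :: "(nat \<times> nat) list" and f :: "nat \<times> nat \<Rightarrow> nat"
  assumes "sorted_wrt (<) (map f L)" "i < length L"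
  shows "card {y \<in> f ` set L. y < f (L ! i)} = i"
proof -
  have "f ` set L = set (map f L)" by simp
  then have "sorted_list_of_set (f ` set L) = map f L"
    using sorted_list_of_set_strict[OF assms(1)] by simp
  then show ?thesis using rank_nth[of "f ` set L" i] assms
    by (metis List.finite_set distinct_card length_map nth_map set_map strict_sorted_iff)
qed

locale Ldata =
  fixes n :: nat and L :: "(nat \<times> nat) list"
  assumes s1: "sorted_wrt (<) (map fst L)" and s2: "sorted_wrt (<) (map snd L)"
    and rng: "\<And>p. p \<in> set L \<Longrightarrow> 1 \<le> fst p \<and> fst p \<le> snd p \<and> snd p \<le> n"
    and cov: "\<And>x. 1 \<le> x \<Longrightarrow> x \<le> n \<Longrightarrow> \<exists>p\<in>set L. fst p \<le> x \<and> x \<le> snd p"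
begin

abbreviation "B \<equiv> fst ` set L"
abbreviation "A \<equiv> snd ` set L"
abbreviation "C \<equiv> {1..n} - B"
abbreviation "D \<equiv> {1..n} - A"
abbreviation "\<sigma> \<equiv> sigL n L"
definition h where "h x = sorted_list_of_set D ! card {y \<in> C. y < x}"

lemma BA_sub: "B \<subseteq> {1..n}" "A \<subseteq> {1..n}" using rng by force+

lemma ord_iff: "p \<in> set L \<Longrightarrow> q \<in> set L \<Longrightarrow> fst p < fst q \<longleftrightarrow> snd p < snd q"
proof -
  assume "p \<in> set L" "q \<in> set L"
  then obtain i j where "i < length L" "j < length L" "p = L ! i" "q = L ! j"
    by (auto simp: in_set_conv_nth)
  then show ?thesis using sorted_idx_iff[OF s1] sorted_idx_iff[OF s2] by simp
qed

lemma eq_fst: "p \<in> set L \<Longrightarrow> q \<in> set L \<Longrightarrow> fst p = fst q \<Longrightarrow> p = q"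
proof -
  assume "p \<in> set L" "q \<in> set L" "fst p = fst q"
  then obtain i j where "i < length L" "j < length L" "p = L ! i" "q = L ! j"
    by (auto simp: in_set_conv_nth)
  then show ?thesis using sorted_idx_iff[OF s1, of i j] sorted_idx_iff[OF s1, of j i] \<open>fst p = fst q\<close>
    by (metis linorder_neqE_nat less_irrefl)
qed

lemma eq_snd: "p \<in> set L \<Longrightarrow> q \<in> set L \<Longrightarrow> snd p = snd q \<Longrightarrow> p = q"
proof -
  assume "p \<in> set L" "q \<in> set L" "snd p = snd q"
  then obtain i j where "i < length L" "j < length L" "p = L ! i" "q = L ! j"
    by (auto simp: in_set_conv_nth)
  then show ?thesis using sorted_idx_iff[OF s2, of i j] sorted_idx_iff[OF s2, of j i] \<open>snd p = snd q\<close>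
    by (metis linorder_neqE_nat less_irrefl)
qed

lemma dist: "distinct (map fst L)" using s1 strict_sorted_iff by blast

lemma sig_B: "(b, a) \<in> set L \<Longrightarrow> \<sigma> b = a"
  using dist by (simp add: sigL_def)

lemma sig_C: "x \<in> C \<Longrightarrow> \<sigma> x = h x"
proof -
  assume x: "x \<in> C"
  then have "map_of L x = None" by (simp add: map_of_eq_None_iff)
  then show ?thesis using x by (simp add: sigL_def h_def)
qed

lemma sig_out: "x \<notin> {1..n} \<Longrightarrow> \<sigma> x = x"
proof -
  assume x: "x \<notin> {1..n}"
  then have "x \<notin> B" using BA_sub by auto
  then have "map_of L x = None" by (simp add: map_of_eq_None_iff)
  then show ?thesis using x by (auto simp: sigL_def)
qed

lemma cardBA: "card B = length L" "card A = length L"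
proof -
  show "card B = length L" using dist by (metis distinct_card length_map set_map)
  have "distinct (map snd L)" using s2 strict_sorted_iff by blast
  then show "card A = length L" by (metis distinct_card length_map set_map)
qed

lemma cardCD: "card C = card D"
  using cardBA BA_sub by (simp add: card_Diff_subset finite_subset)

lemma h_in: "x \<in> C \<Longrightarrow> h x \<in> D"
  unfolding h_def using nth_in[of D] rank_less_card[of C x] cardCD by auto

lemma h_mono: "x \<in> C \<Longrightarrow> y \<in> C \<Longrightarrow> x < y \<Longrightarrow> h x < h y"
proof -
  assume a: "x \<in> C" "y \<in> C" "x < y"
  have r: "card {z\<in>C. z < x} < card {z\<in>C. z < y}" using rank_mono[of C x y] a by auto
  have "card {z\<in>C. z < y} < card D" using rank_less_card[of C y] a cardCD by auto
  then show ?thesis unfolding h_def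
    using sorted_wrt_nth_less[OF strict_sorted_list_of_set[of D]] r by simp
qed

lemma key:
  assumes x: "x \<in> C" and p: "p \<in> set L" "fst p \<le> x" "x \<le> snd p"
  shows "h x < snd p" "h x < x"
proof -
  obtain i where i: "i < length L" "p = L ! i" using p by (auto simp: in_set_conv_nth)
  have bx: "fst p < x" using x p by (metis Diff_iff image_eqI le_neq_implies_less)
  have xn: "x \<le> n" "1 \<le> x" using x by auto
  have an: "snd p \<le> n" using rng p by auto
  define r where "r = card {y\<in>C. y < x}"
  define cB where "cB = card {y\<in>B. y < x}"
  have e1: "r + cB = x - 1" unfolding r_def cB_def using split_count[OF BA_sub(1)] xn by simp
  have ri: "card {y\<in>B. y < fst p} = i" using rank_L[OF s1 i(1)] i by simp
  have "insert (fst p) {y\<in>B. y < fst p} \<subseteq> {y\<in>B. y < x}" using bx p by auto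
  then have "card (insert (fst p) {y\<in>B. y < fst p}) \<le> cB" unfolding cB_def by (intro card_mono) auto
  then have cB: "Suc i \<le> cB" using ri by simp
  define m where "m = card {y\<in>D. y < snd p}"
  have ai: "card {y\<in>A. y < snd p} = i" using rank_L[OF s2 i(1)] i by simp
  have e2: "m + i = snd p - 1" unfolding m_def using split_count[OF BA_sub(2), of "snd p"] an ai by simp
  have rc: "r < card D" unfolding r_def using rank_less_card[of C x] x cardCD by auto
  have "r < m" using e1 e2 cB p(3) xn by linarith
  then show "h x < snd p" unfolding h_def r_def[symmetric] using nth_less_iff[of D r "snd p"] rc m_def by simp
  define m' where "m' = card {y\<in>D. y < x}"
  define cA where "cA = card {y\<in>A. y < x}"
  have e3: "m' + cA = x - 1" unfolding m'_def cA_def using split_count[OF BA_sub(2)] xn by simp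
  have "{y\<in>A. y < x} \<subseteq> {y\<in>A. y < snd p}" using p(3) by auto
  then have "cA \<le> card {y\<in>A. y < snd p}" unfolding cA_def by (intro card_mono) auto
  then have "cA \<le> i" using ai by simp
  then have "r < m'" using e1 e3 cB xn by linarith
  then show "h x < x" unfolding h_def r_def[symmetric] using nth_less_iff[of D r x] rc m'_def by simp
qed

lemma cov_C: "x \<in> C \<Longrightarrow> \<exists>p\<in>set L. fst p < x \<and> x \<le> snd p"
proof -
  assume x: "x \<in> C"
  then have "\<exists>p\<in>set L. fst p \<le> x \<and> x \<le> snd p" using cov by auto
  then obtain p where p: "p \<in> set L" "fst p \<le> x" "x \<le> snd p" by blast
  have "fst p \<noteq> x" using x p(1) by auto
  then have "fst p < x" using p(2) by simp
  then show ?thesis using p by blast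
qed

lemma bij_C: "bij_betw h C D"
proof -
  have inj: "inj_on h C"
  proof (rule inj_onI)
    fix x y assume a: "x \<in> C" "y \<in> C" "h x = h y"
    show "x = y"
      using h_mono[OF a(1,2)] h_mono[OF a(2,1)] a(3) by (cases x y rule: linorder_cases) auto
  qed
  have sub: "h ` C \<subseteq> D" by (rule image_subsetI) (rule h_in)
  have "card (h ` C) = card D" using card_image[OF inj] cardCD by simp
  moreover have "finite D" by simp
  ultimately have "h ` C = D" using card_subset_eq[OF _ sub] by simp
  then show ?thesis using inj by (simp add: bij_betw_def)
qed

lemma bij_B: "bij_betw \<sigma> B A"
proof -
  have inj: "inj_on \<sigma> B"
  proof (rule inj_onI)
    fix x y assume "x \<in> B" "y \<in> B" "\<sigma> x = \<sigma> y"
    then obtain p q where "p \<in> set L" "q \<in> set L" "x = fst p" "y = fst q" "\<sigma> x = \<sigma> y" by auto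
    then have "snd p = snd q" using sig_B[of "fst p" "snd p"] sig_B[of "fst q" "snd q"] by simp
    then have "p = q" using eq_snd \<open>p \<in> set L\<close> \<open>q \<in> set L\<close> by blast
    then show "x = y" using \<open>x = fst p\<close> \<open>y = fst q\<close> by simp
  qed
  have "\<sigma> ` B = A"
  proof safe
    fix p assume "p \<in> set L" then show "\<sigma> (fst p) \<in> A" using sig_B[of "fst p" "snd p"] by auto
  next
    fix p assume "p \<in> set L" then show "snd p \<in> \<sigma> ` B" using sig_B[of "fst p" "snd p"] by force
  qed
  then show ?thesis using inj by (simp add: bij_betw_def)
qed

lemma perm: "\<sigma> permutes {1..n}"
proof (rule bij_imp_permutes)
  have "bij_betw \<sigma> C D" using bij_C by (rule bij_betw_cong[THEN iffD2, rotated]) (simp add: sig_C)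
  moreover have "A \<inter> D = {}" by blast
  ultimately have "bij_betw \<sigma> (B \<union> C) (A \<union> D)" using bij_B bij_betw_combine by blast
  moreover have "B \<union> C = {1..n}" using BA_sub(1) by blast
  moreover have "A \<union> D = {1..n}" using BA_sub(2) by blast
  ultimately show "bij_betw \<sigma> {1..n} {1..n}" by simp
qed (rule sig_out)

lemma mono_B: "x \<in> B \<Longrightarrow> y \<in> B \<Longrightarrow> x < y \<Longrightarrow> \<sigma> x < \<sigma> y"
  using ord_iff sig_B by force

lemma mono_C: "x \<in> C \<Longrightarrow> y \<in> C \<Longrightarrow> x < y \<Longrightarrow> \<sigma> x < \<sigma> y"
  using h_mono sig_C by simp

lemma av: "\<sigma> \<in> Av321 n"
proof -
  have "\<not> (\<exists>i j k. 1 \<le> i \<and> i < j \<and> j < k \<and> k \<le> n \<and> \<sigma> i > \<sigma> j \<and> \<sigma> j > \<sigma> k)"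
  proof
    assume "\<exists>i j k. 1 \<le> i \<and> i < j \<and> j < k \<and> k \<le> n \<and> \<sigma> i > \<sigma> j \<and> \<sigma> j > \<sigma> k"
    then obtain i j k where a: "1 \<le> i" "i < j" "j < k" "k \<le> n" "\<sigma> i > \<sigma> j" "\<sigma> j > \<sigma> k" by blast
    have same: "\<sigma> u < \<sigma> v" if "u \<in> {1..n}" "v \<in> {1..n}" "u \<in> B \<longleftrightarrow> v \<in> B" "u < v" for u v
    proof (cases "u \<in> B")
      case True then show ?thesis using that mono_B by auto
    next
      case False then show ?thesis using that mono_C by auto
    qed
    have iv: "i \<in> {1..n}" "j \<in> {1..n}" "k \<in> {1..n}" using a by auto
    show False
    proof (cases "i \<in> B \<longleftrightarrow> j \<in> B")
      case True then show ?thesis using same[OF iv(1,2) True] a by simp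
    next
      case F1: False
      show ?thesis
      proof (cases "j \<in> B \<longleftrightarrow> k \<in> B")
        case True then show ?thesis using same[OF iv(2,3) True] a by simp
      next
        case False
        then have "i \<in> B \<longleftrightarrow> k \<in> B" using F1 by blast
        then show ?thesis using same[OF iv(1,3)] a by simp
      qed
    qed
  qed
  then show ?thesis using perm by (simp add: Av321_def)
qed

lemma ltr: "ltr_max n \<sigma> = B"
proof safe
  fix m assume m: "m \<in> ltr_max n \<sigma>"
  then have m1: "1 \<le> m" "m \<le> n" by (auto simp: ltr_max_def)
  show "m \<in> B"
  proof (rule ccontr)
    assume "m \<notin> B"
    then have mC: "m \<in> C" using m1 by auto
    then obtain p where p: "p \<in> set L" "fst p < m" "m \<le> snd p" using cov_C by blast
    have "\<sigma> (fst p) < \<sigma> m" using m p rng[OF p(1)] by (auto simp: ltr_max_def)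
    moreover have "\<sigma> m < snd p" using key[OF mC p(1)] p sig_C[OF mC] by simp
    ultimately show False using sig_B[of "fst p" "snd p"] p by simp
  qed
next
  fix p assume p: "p \<in> set L"
  have r: "1 \<le> fst p" "fst p \<le> n" using rng[OF p] by auto
  have lt: "\<sigma> j < \<sigma> (fst p)" if j: "1 \<le> j" "j < fst p" for j
  proof (cases "j \<in> B")
    case True
    moreover have "fst p \<in> B" using p by simp
    ultimately show ?thesis using mono_B[of j "fst p"] j by blast
  next
    case False
    then have jC: "j \<in> C" using j r by auto
    then obtain q where q: "q \<in> set L" "fst q < j" "j \<le> snd q" using cov_C by blast
    have "\<sigma> j < snd q" using key[OF jC q(1)] q sig_C[OF jC] by simp
    moreover have "snd q < snd p" using ord_iff[OF q(1) p] q j by simp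
    ultimately show ?thesis using sig_B[of "fst p" "snd p"] p by simp
  qed
  have "\<forall>j. 1 \<le> j \<and> j < fst p \<longrightarrow> \<sigma> j < \<sigma> (fst p)" using lt by blast
  moreover have "fst p \<in> {1..n}" using r by simp
  ultimately show "fst p \<in> ltr_max n \<sigma>" unfolding ltr_max_def by (intro CollectI conjI)
qed

lemma ltr_pairs: "{(m, \<sigma> m) | m. m \<in> ltr_max n \<sigma>} = set L"
proof -
  have "{(m, \<sigma> m) | m. m \<in> B} = set L"
  proof safe
    fix p assume "p \<in> set L" then show "(fst p, \<sigma> (fst p)) \<in> set L" using sig_B[of "fst p" "snd p"] by simp
  next
    fix a b assume ab: "(a, b) \<in> set L"
    then have "(a, b) = (fst (a, b), \<sigma> (fst (a, b)))" using sig_B by simp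
    then show "\<exists>m. (a, b) = (m, \<sigma> m) \<and> m \<in> B" using ab by (metis image_eqI)
  qed
  then show ?thesis unfolding ltr .
qed

lemma fixes_L: "{x \<in> {1..n}. \<sigma> x = x} = {b. (b, b) \<in> set L}"
proof safe
  fix x assume x: "x \<in> {1..n}" "\<sigma> x = x"
  show "(x, x) \<in> set L"
  proof (cases "x \<in> B")
    case True
    then obtain a where xa: "(x, a) \<in> set L" by auto
    then have "a = x" using sig_B[OF xa] x(2) by simp
    then show ?thesis using xa by simp
  next
    case False
    then have xC: "x \<in> C" using x by auto
    then obtain p where "p \<in> set L" "fst p < x" "x \<le> snd p" using cov_C by blast
    then have "h x < x" using key[OF xC] by auto
    then show ?thesis using sig_C[OF xC] x by simp
  qed
next
  fix b assume bb: "(b, b) \<in> set L"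
  show "b \<in> {1..n}" using rng[OF bb] by simp
  show "\<sigma> b = b" using sig_B[OF bb] .
qed

end




definition Lt :: "ptree \<Rightarrow> (nat \<times> nat) list" where
  "Lt t = map (\<lambda>(s, p). (s - p + 1, s)) (leaf_data t)"

lemma sorted_filter_upt:
  assumes "\<And>i j. i < j \<Longrightarrow> j < N \<Longrightarrow> Q i \<Longrightarrow> Q j \<Longrightarrow> R i j"
  shows "sorted_wrt R (filter Q [0..<N])"
proof -
  have "sorted_wrt (<) (filter Q [0..<N])" by (intro sorted_wrt_filter) simp
  then show ?thesis by (rule sorted_wrt_mono_rel[rotated]) (auto intro: assms)
qed

context
  fixes t :: ptree and n :: nat
  assumes nv: "nverts t = Suc n" and n1: "1 \<le> n"
begin

definition "PP = preorder 0 t"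

lemma PV: "treeV 0 PP" unfolding PP_def by (rule preorder_V)
lemma Plen: "length PP = Suc n" unfolding PP_def using length_preorder nv by simp

lemma LD_eq: "leaf_data t = map (\<lambda>j. (j, fst (PP ! j))) (filter (\<lambda>j. snd (PP ! j)) [0..<Suc n])"
  using leaf_data_alt[of t] Plen by (simp add: PP_def Let_def)

lemma Lt_eq: "Lt t = map (\<lambda>j. (j - fst (PP ! j) + 1, j)) (filter (\<lambda>j. snd (PP ! j)) [0..<Suc n])"
  unfolding Lt_def LD_eq by simp

lemma Lt_eq': "Lt t = map (\<lambda>j. (j - fst (preorder 0 t ! j) + 1, j)) (filter (\<lambda>j. snd (preorder 0 t ! j)) [0..<Suc n])"
  using Lt_eq unfolding PP_def .

lemma leaf_props:
  assumes "j \<le> n" "snd (PP ! j)"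
  shows "1 \<le> j" "1 \<le> fst (PP ! j)" "fst (PP ! j) \<le> j"
proof -
  show j1: "1 \<le> j" using lf0[OF PV] assms Plen n1 by (cases j) auto
  show "1 \<le> fst (PP ! j)" using V2[OF PV, of j] j1 assms Plen by simp
  show "fst (PP ! j) \<le> j" using dd_le[OF PV, of j] assms Plen by simp
qed

lemma Ldata_t: "Ldata n (Lt t)"
proof
  show "sorted_wrt (<) (map fst (Lt t))"
    unfolding Lt_eq map_map comp_def fst_conv sorted_wrt_map
  proof (rule sorted_filter_upt)
    fix i j assume a: "i < j" "j < Suc n" "snd (PP ! i)" "snd (PP ! j)"
    have "i - fst (PP ! i) < j - fst (PP ! j)" using T2[OF PV a(3) a(1)] a Plen by simp
    then show "i - fst (PP ! i) + 1 < j - fst (PP ! j) + 1" by simp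
  qed
  show "sorted_wrt (<) (map snd (Lt t))"
    unfolding Lt_eq map_map comp_def snd_conv sorted_wrt_map by (rule sorted_filter_upt) simp
  fix p assume "p \<in> set (Lt t)"
  then obtain j where j: "j \<le> n" "snd (PP ! j)" "p = (j - fst (PP ! j) + 1, j)"
    unfolding Lt_eq by (auto simp del: upt_Suc)
  then show "1 \<le> fst p \<and> fst p \<le> snd p \<and> snd p \<le> n" using leaf_props[OF j(1,2)] by simp
next
  fix x assume x: "1 \<le> x" "x \<le> n"
  then obtain j where j: "snd (PP ! j)" "j < length PP" "x \<le> j" "j - fst (PP ! j) < x"
    using T3[OF PV, of x] Plen by auto
  then have "(j - fst (PP ! j) + 1, j) \<in> set (Lt t)" unfolding Lt_eq using Plen by (auto simp del: upt_Suc)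
  then show "\<exists>p\<in>set (Lt t). fst p \<le> x \<and> x \<le> snd p" using j by force
qed

lemma tau_eq: "tau t = sigL n (Lt t)"
proof -
  have A: "leafA t = snd ` set (Lt t)"
    unfolding leafA_def Lt_def by (force simp: image_image case_prod_beta)
  have B: "leafB t = fst ` set (Lt t)"
    unfolding leafB_def Lt_def by (force simp: image_image case_prod_beta)
  have m: "map (\<lambda>(s, p). (s - p + 1, s)) (leaf_data t) = Lt t" by (simp add: Lt_def)
  show ?thesis unfolding tau_def sigL_def A B m using nv by (simp add: Let_def)
qed

lemma fix_eq: "{b. (b, b) \<in> set (Lt t)} = {s. (s, 1) \<in> set (leaf_data t)}"
proof safe
  fix b assume "(b, b) \<in> set (Lt t)"
  then obtain j where j: "j \<le> n" "snd (PP ! j)" "b = j" "j - fst (PP ! j) + 1 = j"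
    unfolding Lt_eq by (auto simp del: upt_Suc)
  then have "fst (PP ! j) = 1" using leaf_props[OF j(1,2)] by simp
  then show "(b, 1) \<in> set (leaf_data t)" unfolding LD_eq using j by (auto simp del: upt_Suc)
next
  fix s assume "(s, 1) \<in> set (leaf_data t)"
  then obtain j where j: "j \<le> n" "snd (PP ! j)" "s = j" "fst (PP ! j) = 1"
    unfolding LD_eq by (auto simp del: upt_Suc)
  then have "(s, s) = (j - fst (PP ! j) + 1, j)" using leaf_props[OF j(1,2)] by simp
  moreover have "j \<in> set (filter (\<lambda>j. snd (PP ! j)) [0..<Suc n])" using j by (simp del: upt_Suc)
  ultimately show "(s, s) \<in> set (Lt t)" unfolding Lt_eq by (metis (no_types, lifting) image_eqI set_map)
qed

lemma tree_main:
  "sorted_wrt (<) (map fst (leaf_data t))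
   \<and> sorted_wrt (<) (map (\<lambda>(s, p). s - p + 1) (leaf_data t))
   \<and> leafA t \<subseteq> {1..n} \<and> leafB t \<subseteq> {1..n}
   \<and> tau t \<in> Av321 n
   \<and> {(m, tau t m) | m. m \<in> ltr_max n (tau t)} = set (map (\<lambda>(s, p). (s - p + 1, s)) (leaf_data t))
   \<and> {x \<in> {1..n}. tau t x = x} = {s. (s, 1) \<in> set (leaf_data t)}"
proof -
  interpret Ldata n "Lt t" by (rule Ldata_t)
  have A: "leafA t = snd ` set (Lt t)"
    unfolding leafA_def Lt_def by (force simp: image_image case_prod_beta)
  have B: "leafB t = fst ` set (Lt t)"
    unfolding leafB_def Lt_def by (force simp: image_image case_prod_beta)
  have "map fst (leaf_data t) = map snd (Lt t)" by (simp add: Lt_def case_prod_beta)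
  moreover have "map (\<lambda>(s, p). s - p + 1) (leaf_data t) = map fst (Lt t)" by (simp add: Lt_def case_prod_beta)
  moreover have "set (map (\<lambda>(s, p). (s - p + 1, s)) (leaf_data t)) = set (Lt t)" by (simp add: Lt_def)
  ultimately show ?thesis using s1 s2 BA_sub A B av ltr_pairs fixes_L fix_eq tau_eq
    by simp
qed

end




lemma av_perm: "\<sigma> \<in> Av321 n \<Longrightarrow> \<sigma> permutes {1..n}" by (simp add: Av321_def)
lemma av_no: "\<sigma> \<in> Av321 n \<Longrightarrow> 1 \<le> i \<Longrightarrow> i < j \<Longrightarrow> j < k \<Longrightarrow> k \<le> n \<Longrightarrow> \<sigma> i > \<sigma> j \<Longrightarrow> \<sigma> j > \<sigma> k \<Longrightarrow> False"
  unfolding Av321_def by blast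

lemma av_incr:
  assumes s: "\<sigma> \<in> Av321 n" and x: "x \<in> {1..n} - ltr_max n \<sigma>" and y: "y \<in> {1..n} - ltr_max n \<sigma>" and xy: "x < y"
  shows "\<sigma> x < \<sigma> y"
proof (rule ccontr)
  assume "\<not> \<sigma> x < \<sigma> y"
  moreover have "\<sigma> x \<noteq> \<sigma> y" using permutes_inj[OF av_perm[OF s]] xy by (metis inj_eq less_irrefl)
  ultimately have yx: "\<sigma> y < \<sigma> x" by simp
  have "x \<in> {1..n}" "x \<notin> ltr_max n \<sigma>" using x by auto
  then obtain j where j: "1 \<le> j" "j < x" "\<not> \<sigma> j < \<sigma> x" unfolding ltr_max_def by blast
  have "\<sigma> j \<noteq> \<sigma> x" using permutes_inj[OF av_perm[OF s]] j(2) by (metis inj_eq less_irrefl)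
  then have "\<sigma> x < \<sigma> j" using j(3) by simp
  then show False using av_no[OF s j(1) j(2) xy _ _ yx] y by auto
qed

lemma av_unique:
  assumes s1: "\<sigma>1 \<in> Av321 n" and s2: "\<sigma>2 \<in> Av321 n"
    and eq: "{(m, \<sigma>1 m) | m. m \<in> ltr_max n \<sigma>1} = {(m, \<sigma>2 m) | m. m \<in> ltr_max n \<sigma>2}"
  shows "\<sigma>1 = \<sigma>2"
proof -
  define M where "M = ltr_max n \<sigma>1"
  have M1: "\<And>m. m \<in> M \<Longrightarrow> m \<in> ltr_max n \<sigma>2 \<and> \<sigma>1 m = \<sigma>2 m"
  proof -
    fix m assume "m \<in> M"
    then have "(m, \<sigma>1 m) \<in> {(m, \<sigma>2 m) | m. m \<in> ltr_max n \<sigma>2}" using eq M_def by blast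
    then show "m \<in> ltr_max n \<sigma>2 \<and> \<sigma>1 m = \<sigma>2 m" by auto
  qed
  have M2: "\<And>m. m \<in> ltr_max n \<sigma>2 \<Longrightarrow> m \<in> M"
  proof -
    fix m assume "m \<in> ltr_max n \<sigma>2"
    then have "(m, \<sigma>2 m) \<in> {(m, \<sigma>1 m) | m. m \<in> ltr_max n \<sigma>1}" using eq by blast
    then show "m \<in> M" using M_def by auto
  qed
  have MM: "ltr_max n \<sigma>2 = M" using M1 M2 by blast
  have Msub: "M \<subseteq> {1..n}" unfolding M_def ltr_max_def by auto
  have img: "\<sigma>1 ` M = \<sigma>2 ` M" using M1 by (auto intro: image_cong)
  define D where "D = {1..n} - \<sigma>1 ` M"
  have imgC: "\<sigma> ` ({1..n} - M) = D" if "\<sigma> \<in> Av321 n" "\<sigma> ` M = \<sigma>1 ` M" for \<sigma>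
  proof -
    have p: "\<sigma> permutes {1..n}" using av_perm[OF that(1)] .
    have "\<sigma> ` ({1..n} - M) = \<sigma> ` {1..n} - \<sigma> ` M"
      using permutes_inj[OF p] by (simp add: image_set_diff)
    then show ?thesis using permutes_image[OF p] that(2) D_def by simp
  qed
  show ?thesis
  proof
    fix x
    show "\<sigma>1 x = \<sigma>2 x"
    proof (cases "x \<in> {1..n}")
      case False
      then show ?thesis using permutes_not_in[OF av_perm[OF s1]] permutes_not_in[OF av_perm[OF s2]] by simp
    next
      case True
      show ?thesis
      proof (cases "x \<in> M")
        case True then show ?thesis using M1 by simp
      next
        case False
        then have xC: "x \<in> {1..n} - M" using \<open>x \<in> {1..n}\<close> by simp
        have "\<sigma>1 x = sorted_list_of_set D ! card {y \<in> {1..n} - M. y < x}"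
          by (rule incr_unique[OF _ imgC[OF s1 refl] _ xC]) (auto intro: av_incr[OF s1] simp: M_def)
        moreover have "\<sigma>2 x = sorted_list_of_set D ! card {y \<in> {1..n} - M. y < x}"
          by (rule incr_unique[OF _ imgC[OF s2 img[symmetric]] _ xC]) (auto intro: av_incr[OF s2] simp: MM[symmetric])
        ultimately show ?thesis by simp
      qed
    qed
  qed
qed

context
  fixes \<sigma> :: "nat \<Rightarrow> nat" and n :: nat
  assumes s: "\<sigma> \<in> Av321 n" and n1: "1 \<le> n"
begin

definition "\<beta> j = (LEAST x. 1 \<le> x \<and> j \<le> \<sigma> x)"

lemma sperm: "\<sigma> permutes {1..n}" using av_perm[OF s] .

lemma sig_rng: "x \<in> {1..n} \<Longrightarrow> \<sigma> x \<in> {1..n}" using permutes_in_image[OF sperm] by simp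

lemma ex_big: "j \<le> n \<Longrightarrow> \<exists>x. 1 \<le> x \<and> x \<le> max 1 j \<and> j \<le> \<sigma> x"
proof -
  assume jn: "j \<le> n"
  show ?thesis
  proof (cases "j = 0")
    case True then show ?thesis by (intro exI[of _ 1]) simp
  next
    case False
    show ?thesis
    proof (rule ccontr)
      assume "\<not> ?thesis"
      then have "\<forall>x\<in>{1..j}. \<sigma> x < j" using False by force
      then have "\<sigma> ` {1..j} \<subseteq> {1..<j}" using sig_rng jn by fastforce
      moreover have "inj_on \<sigma> {1..j}" using permutes_inj[OF sperm] by (meson inj_on_subset subset_UNIV)
      ultimately have "card {1..j} \<le> card {1..<j}"
        by (metis card_image card_mono finite_atLeastLessThan)
      then show False using False by simp
    qed
  qed
qed

lemma beta:
  assumes "j \<le> n"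
  shows "1 \<le> \<beta> j" "j \<le> \<sigma> (\<beta> j)" "\<beta> j \<le> max 1 j" "\<And>y. 1 \<le> y \<Longrightarrow> y < \<beta> j \<Longrightarrow> \<sigma> y < j"
proof -
  obtain x where x: "1 \<le> x" "x \<le> max 1 j" "j \<le> \<sigma> x" using ex_big[OF assms] by blast
  show "1 \<le> \<beta> j" "j \<le> \<sigma> (\<beta> j)" unfolding \<beta>_def using LeastI[of "\<lambda>x. 1 \<le> x \<and> j \<le> \<sigma> x" x] x by auto
  have "\<beta> j \<le> x" unfolding \<beta>_def using x by (intro Least_le) simp
  then show "\<beta> j \<le> max 1 j" using x by simp
  fix y assume "1 \<le> y" "y < \<beta> j"
  then show "\<sigma> y < j" using not_less_Least[of y "\<lambda>x. 1 \<le> x \<and> j \<le> \<sigma> x"] unfolding \<beta>_def by auto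
qed

lemma beta_ltr: "j \<le> n \<Longrightarrow> \<beta> j \<in> ltr_max n \<sigma>"
proof -
  assume j: "j \<le> n"
  have "\<beta> j \<le> n" using beta(3)[OF j] j n1 by simp
  moreover have "\<forall>y. 1 \<le> y \<and> y < \<beta> j \<longrightarrow> \<sigma> y < \<sigma> (\<beta> j)"
    using beta(2,4)[OF j] by (meson order_less_le_trans)
  ultimately show ?thesis using beta(1)[OF j] unfolding ltr_max_def by simp
qed

lemma beta_sig: "m \<in> ltr_max n \<sigma> \<Longrightarrow> \<beta> (\<sigma> m) = m"
  unfolding \<beta>_def
proof (rule Least_equality)
  assume m: "m \<in> ltr_max n \<sigma>"
  then show "1 \<le> m \<and> \<sigma> m \<le> \<sigma> m" unfolding ltr_max_def by simp
  fix y assume y: "1 \<le> y \<and> \<sigma> m \<le> \<sigma> y"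
  show "m \<le> y"
  proof (rule ccontr)
    assume "\<not> m \<le> y"
    then have "\<sigma> y < \<sigma> m" using m y unfolding ltr_max_def by auto
    then show False using y by simp
  qed
qed

definition "AA = \<sigma> ` ltr_max n \<sigma>"

lemma inA: "j \<le> n \<Longrightarrow> j \<in> AA \<longleftrightarrow> 1 \<le> j \<and> \<sigma> (\<beta> j) = j"
proof
  assume j: "j \<le> n" "j \<in> AA"
  then obtain m where m: "m \<in> ltr_max n \<sigma>" "j = \<sigma> m" by (auto simp: AA_def)
  then have "m \<in> {1..n}" by (simp add: ltr_max_def)
  then show "1 \<le> j \<and> \<sigma> (\<beta> j) = j" using m beta_sig sig_rng by auto
next
  assume j: "j \<le> n" "1 \<le> j \<and> \<sigma> (\<beta> j) = j"
  then show "j \<in> AA" using beta_ltr[OF j(1)] unfolding AA_def by (metis image_eqI)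
qed

definition "PS = map (\<lambda>j. (j + 1 - \<beta> j, j \<in> AA)) [0..<Suc n]"

lemma PS_nth: "j \<le> n \<Longrightarrow> PS ! j = (j + 1 - \<beta> j, j \<in> AA)"
  unfolding PS_def by (simp del: upt_Suc add: nth_map_upt)

lemma beta_le: "1 \<le> j \<Longrightarrow> j \<le> n \<Longrightarrow> \<beta> j \<le> j" using beta(3) by fastforce

lemma beta_mono: "Suc j \<le> n \<Longrightarrow> \<beta> j \<le> \<beta> (Suc j)"
proof -
  assume a: "Suc j \<le> n"
  have "1 \<le> \<beta> (Suc j) \<and> j \<le> \<sigma> (\<beta> (Suc j))" using beta(1,2)[OF a] by simp
  then show ?thesis unfolding \<beta>_def[of j] by (rule Least_le)
qed

lemma PS_V: "treeV 0 PS"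
proof (rule treeV_of_idx)
  show "PS \<noteq> []" by (simp add: PS_def)
  show "fst (PS ! 0) = 0" using PS_nth[of 0] beta(1)[of 0] by simp
  fix j
  show "0 < j \<Longrightarrow> j < length PS \<Longrightarrow> 0 < fst (PS ! j)"
  proof -
    assume "0 < j" "j < length PS"
    then have "j \<le> n" "1 \<le> j" by (auto simp: PS_def)
    then show ?thesis using PS_nth[of j] beta_le[of j] by simp
  qed
  assume a: "Suc j < length PS"
  then have jn: "Suc j \<le> n" by (simp add: PS_def)
  have bS: "\<beta> (Suc j) \<le> Suc j" using beta_le[of "Suc j"] jn by simp
  have bj: "\<beta> j \<le> Suc j" using beta(3)[of j] jn by simp
  show "okstep (PS ! j) (PS ! Suc j)"
  proof (cases "j \<in> AA")
    case True
    then have "\<sigma> (\<beta> j) = j" "1 \<le> j" using inA jn by auto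
    moreover have "Suc j \<le> \<sigma> (\<beta> (Suc j))" using beta(2)[OF jn] .
    ultimately have "\<beta> (Suc j) \<noteq> \<beta> j" by auto
    then have "\<beta> j < \<beta> (Suc j)" using beta_mono[OF jn] by simp
    then show ?thesis using True PS_nth[of j] PS_nth[OF jn] jn bS bj by (simp add: okstep_def)
  next
    case False
    have "\<sigma> (\<beta> j) \<noteq> j"
    proof (cases "j = 0")
      case True
      have "\<beta> j \<in> {1..n}" using beta(1,3)[of j] jn n1 by auto
      then show ?thesis using sig_rng True by fastforce
    next
      case F: False
      then show ?thesis using False inA jn by simp
    qed
    then have "Suc j \<le> \<sigma> (\<beta> j)" using beta(2)[of j] jn by simp
    then have "\<beta> (Suc j) \<le> \<beta> j" unfolding \<beta>_def[of "Suc j"] using beta(1)[of j] jn by (intro Least_le) simp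
    then have "\<beta> (Suc j) = \<beta> j" using beta_mono[OF jn] by simp
    then show ?thesis using False PS_nth[of j] PS_nth[OF jn] jn bj by (simp add: okstep_def)
  qed
next
  have "\<sigma> (\<beta> n) = n" using beta(2)[of n] sig_rng beta(1,3)[of n] n1 by fastforce
  then have "n \<in> AA" using inA[of n] n1 by simp
  then show "snd (PS ! (length PS - 1))" using PS_nth[of n] by (simp add: PS_def)
qed

lemma surj_tree: "\<exists>t. nverts t = Suc n \<and> tau t = \<sigma>"
proof -
  obtain t where t: "preorder 0 t = PS" using tree_build[OF PS_V] by blast
  have nv: "nverts t = Suc n" using length_preorder[of 0 t] t by (simp add: PS_def)
  have "set (Lt t) = {(m, \<sigma> m) | m. m \<in> ltr_max n \<sigma>}"
  proof -
    have "Lt t = map (\<lambda>j. (j - fst (PS ! j) + 1, j)) (filter (\<lambda>j. snd (PS ! j)) [0..<Suc n])"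
      using Lt_eq'[OF nv n1] t by simp
    then have e: "set (Lt t) = (\<lambda>j. (j - fst (PS ! j) + 1, j)) ` {j. j \<le> n \<and> snd (PS ! j)}"
      by (auto simp del: upt_Suc)
    show ?thesis unfolding e
    proof safe
      fix j assume j: "j \<le> n" "snd (PS ! j)"
      then have jA: "j \<in> AA" using PS_nth by simp
      then have "1 \<le> j" "\<sigma> (\<beta> j) = j" using inA j by auto
      moreover have "\<beta> j \<le> j" "1 \<le> \<beta> j" using beta_le beta(1) j calculation by auto
      ultimately have "(j - fst (PS ! j) + 1, j) = (\<beta> j, \<sigma> (\<beta> j))" using PS_nth[OF j(1)] by simp
      then show "\<exists>m. (j - fst (PS ! j) + 1, j) = (m, \<sigma> m) \<and> m \<in> ltr_max n \<sigma>"
        using beta_ltr[OF j(1)] by blast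
    next
      fix m assume m: "m \<in> ltr_max n \<sigma>"
      have mr: "m \<in> {1..n}" using m by (simp add: ltr_max_def)
      define j where "j = \<sigma> m"
      have j: "j \<le> n" "1 \<le> j" using sig_rng[OF mr] j_def by auto
      have bj: "\<beta> j = m" using beta_sig[OF m] j_def by simp
      have jA: "j \<in> AA" using m j_def AA_def by simp
      have "m \<le> j" using beta_le[OF j(2,1)] bj by simp
      then have "(m, \<sigma> m) = (j - fst (PS ! j) + 1, j)" using PS_nth[OF j(1)] bj j_def mr by auto
      moreover have "snd (PS ! j)" using PS_nth[OF j(1)] jA by simp
      ultimately show "(m, \<sigma> m) \<in> (\<lambda>j. (j - fst (PS ! j) + 1, j)) ` {j. j \<le> n \<and> snd (PS ! j)}"
        using j by blast
    qed
  qed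
  moreover have tm1: "{(m, tau t m) | m. m \<in> ltr_max n (tau t)} = set (map (\<lambda>(s, p). (s - p + 1, s)) (leaf_data t))"
    and tm2: "tau t \<in> Av321 n" using tree_main[OF nv n1] by blast+
  ultimately have "{(m, tau t m) | m. m \<in> ltr_max n (tau t)} = {(m, \<sigma> m) | m. m \<in> ltr_max n \<sigma>}"
    unfolding Lt_def by simp
  then have "tau t = \<sigma>" using av_unique[OF tm2 s] by blast
  then show ?thesis using nv by blast
qed

end

lemma tau_inj:
  assumes n1: "1 \<le> n" and t: "nverts t = Suc n" and t': "nverts t' = Suc n" and eq: "tau t = tau t'"
  shows "t = t'"
proof -
  have tm1: "{(m, tau t m) | m. m \<in> ltr_max n (tau t)} = set (Lt t)"
    using tree_main[OF t n1] unfolding Lt_def by blast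
  have tm2: "{(m, tau t' m) | m. m \<in> ltr_max n (tau t')} = set (Lt t')"
    using tree_main[OF t' n1] unfolding Lt_def by blast
  have "set (Lt t) = set (Lt t')" using tm1 tm2 eq by simp
  define P where "P = preorder 0 t"
  define Q where "Q = preorder 0 t'"
  have LP: "set (Lt t) = (\<lambda>j. (j - fst (P ! j) + 1, j)) ` {j. j \<le> n \<and> snd (P ! j)}"
    using Lt_eq'[OF t n1] by (auto simp del: upt_Suc simp: P_def)
  have LQ: "set (Lt t') = (\<lambda>j. (j - fst (Q ! j) + 1, j)) ` {j. j \<le> n \<and> snd (Q ! j)}"
    using Lt_eq'[OF t' n1] by (auto simp del: upt_Suc simp: Q_def)
  have LL: "(\<lambda>j. (j - fst (P ! j) + 1, j)) ` {j. j \<le> n \<and> snd (P ! j)} = (\<lambda>j. (j - fst (Q ! j) + 1, j)) ` {j. j \<le> n \<and> snd (Q ! j)}"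
    using LP LQ \<open>set (Lt t) = set (Lt t')\<close> by simp
  have lenP: "length P = Suc n" and lenQ: "length Q = Suc n"
    using length_preorder t t' P_def Q_def by auto
  have VP: "treeV 0 P" and VQ: "treeV 0 Q" using preorder_V P_def Q_def by auto
  have lfe: "snd (P ! j) = snd (Q ! j)" if "j < length P" for j
  proof -
    have "snd (P ! j) \<longleftrightarrow> j \<in> snd ` ((\<lambda>j. (j - fst (P ! j) + 1, j)) ` {j. j \<le> n \<and> snd (P ! j)})"
      using that lenP by force
    also have "\<dots> \<longleftrightarrow> snd (Q ! j)" unfolding LL using that lenP by force
    finally show ?thesis .
  qed
  have "P = Q"
  proof (rule V_inj[OF VP VQ])
    show "length P = length Q" using lenP lenQ by simp
    show "\<And>j. j < length P \<Longrightarrow> snd (P ! j) = snd (Q ! j)" using lfe .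
    fix j assume j: "j < length P" "snd (P ! j)"
    then have "(j - fst (P ! j) + 1, j) \<in> (\<lambda>j. (j - fst (Q ! j) + 1, j)) ` {j. j \<le> n \<and> snd (Q ! j)}"
      using LL lenP by (metis (mono_tags, lifting) image_eqI less_Suc_eq_le mem_Collect_eq)
    then have "j - fst (P ! j) = j - fst (Q ! j)" by auto
    moreover have "fst (P ! j) \<le> j" using dd_le[OF VP j(1)] .
    moreover have "fst (Q ! j) \<le> j" using dd_le[OF VQ] j(1) lenP lenQ by simp
    ultimately show "fst (P ! j) = fst (Q ! j)" by simp
  qed
  then show ?thesis using preorder_inj P_def Q_def by simp
qed



theorem mainTheorem7:
  fixes n :: nat
  assumes "n \<ge> 1"
  shows "(\<forall>t. nverts t = n + 1 \<longrightarrow>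
            sorted_wrt (<) (map fst (leaf_data t))
          \<and> sorted_wrt (<) (map (\<lambda>(s, p). s - p + 1) (leaf_data t))
          \<and> leafA t \<subseteq> {1..n} \<and> leafB t \<subseteq> {1..n}
          \<and> tau t \<in> Av321 n
          \<and> {(m, tau t m) | m. m \<in> ltr_max n (tau t)}
              = set (map (\<lambda>(s, p). (s - p + 1, s)) (leaf_data t))
          \<and> {x \<in> {1..n}. tau t x = x} = {s. (s, 1) \<in> set (leaf_data t)})
       \<and> bij_betw tau {t. nverts t = n + 1} (Av321 n)"
proof -
  have n1: "1 \<le> n" using assms .
  have P1: "\<forall>t. nverts t = n + 1 \<longrightarrow>
            sorted_wrt (<) (map fst (leaf_data t))
          \<and> sorted_wrt (<) (map (\<lambda>(s, p). s - p + 1) (leaf_data t))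
          \<and> leafA t \<subseteq> {1..n} \<and> leafB t \<subseteq> {1..n}
          \<and> tau t \<in> Av321 n
          \<and> {(m, tau t m) | m. m \<in> ltr_max n (tau t)}
              = set (map (\<lambda>(s, p). (s - p + 1, s)) (leaf_data t))
          \<and> {x \<in> {1..n}. tau t x = x} = {s. (s, 1) \<in> set (leaf_data t)}"
  proof (intro allI impI)
    fix t assume "nverts t = n + 1"
    then have "nverts t = Suc n" by simp
    from tree_main[OF this n1] show "sorted_wrt (<) (map fst (leaf_data t))
          \<and> sorted_wrt (<) (map (\<lambda>(s, p). s - p + 1) (leaf_data t))
          \<and> leafA t \<subseteq> {1..n} \<and> leafB t \<subseteq> {1..n}
          \<and> tau t \<in> Av321 n
          \<and> {(m, tau t m) | m. m \<in> ltr_max n (tau t)}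
              = set (map (\<lambda>(s, p). (s - p + 1, s)) (leaf_data t))
          \<and> {x \<in> {1..n}. tau t x = x} = {s. (s, 1) \<in> set (leaf_data t)}" .
  qed
  have inj: "inj_on tau {t. nverts t = n + 1}"
  proof (rule inj_onI)
    fix t t' assume "t \<in> {t. nverts t = n + 1}" "t' \<in> {t. nverts t = n + 1}" "tau t = tau t'"
    then show "t = t'" using tau_inj[OF n1] by simp
  qed
  have img: "tau ` {t. nverts t = n + 1} = Av321 n"
  proof
    show "tau ` {t. nverts t = n + 1} \<subseteq> Av321 n" using P1 by blast
    show "Av321 n \<subseteq> tau ` {t. nverts t = n + 1}"
    proof
      fix \<sigma> assume "\<sigma> \<in> Av321 n"
      then obtain t where "nverts t = Suc n" "tau t = \<sigma>" using surj_tree[OF _ n1] by blast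
      then show "\<sigma> \<in> tau ` {t. nverts t = n + 1}" by force
    qed
  qed
  show ?thesis using P1 inj img by (simp add: bij_betw_def)
qed

end
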